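(* Let $W$ be an eventually periodic subset of $\mathbb{Z}^d$ with periods $u_1,\dots,u_d$, and let $\mathscr{W},\mathcal{W},\mathscr{W}_1$ be as defined in the context. Let $M$ be a minimal complement of $W$ in $\mathbb{Z}^d$. Let $M_\infty$ be the union of those fibres $M_{\bar v}$ ($\bar v\in\mathbb{Z}^d/\mathcal{L}$) such that for every real $N$ there exists $x\in M_{\bar v}$ all of whose coordinates with respect to $u_1,\dots,u_d$ are $\leqslant N$. Let $\mathcal{M}\subseteq M_\infty$ be such that $\pi$ restricts to a bijection $\mathcal{M}\to\pi(M_\infty)$. Then: (1) $M_\infty$ is infinite, $\mathcal{M}$ is a nonempty finite set, $\mathscr{W}_1$ is nonempty, and $\pi(\mathcal{M}+(\mathcal{W}\cup\mathscr{W}_1))=\mathbb{Z}^d/\mathcal{L}$. (2) For every $m\in\mathcal{M}$ there exists $w\in\mathscr{W}_1$ such that $m+w\not\equiv m'+w'\pmod{\mathcal{L}}$ for all $m'\in\mathcal{M}$ and all $w'\in\mathcal{W}$.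
   Context: $d\geqslant1$, $\mathbb{N}=\{0,1,2,\dots\}$. Let $u_1,\dots,u_d\in\mathbb{Z}^d$ satisfy no nontrivial $\mathbb{Z}$-linear relation, $\mathcal{L}=\mathbb{Z}u_1+\dots+\mathbb{Z}u_d$, $P=\mathbb{N}u_1+\dots+\mathbb{N}u_d$, $\pi:\mathbb{Z}^d\to\mathbb{Z}^d/\mathcal{L}$ the quotient map, and $X_{\bar v}=X\cap\pi^{-1}(\bar v)$. Coordinates of $x\in\mathbb{Z}^d$ with respect to $u_1,\dots,u_d$ are the unique $t_i\in\mathbb{Q}$ with $x=\sum t_iu_i$. A nonempty $X\subseteq\mathbb{Z}^d$ is eventually periodic with periods $u_1,\dots,u_d$ if $X\subseteq F+P$ for some nonempty finite $F\subseteq\mathbb{Z}^d$ and $x+P\subseteq X$ for all but finitely many $x\in X$. For such $W$: $\mathscr{W}=\{w\in W:w+P\not\subseteq W\}$; $\mathcal{W}=\{w\in W\setminus\mathscr{W}:(w-P)\cap(W\setminus\mathscr{W})=\{w\}\}$; $\mathscr{W}_1$ is the set of elements of $\mathscr{W}$ congruent modulo $\mathcal{L}$ to no element of $\mathcal{W}$. A nonempty $M\subseteq\mathbb{Z}^d$ is a complement of $W$ if $M+W=\mathbb{Z}^d$, and a minimal complement if no proper subset of $M$ is a complement of $W$. *)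

theory Defs
  imports "HOL-Analysis.Finite_Cartesian_Product"
begin

text \<open>Z^d is modelled as int ^ 'd for a finite index type 'd (so d = CARD('d) >= 1);
  the periods u_1..u_d are a family u :: 'd => int ^ 'd.\<close>

definition lincomb :: "('d::finite \<Rightarrow> int ^ 'd) \<Rightarrow> ('d \<Rightarrow> int) \<Rightarrow> int ^ 'd" where
  "lincomb u c = (\<chi> j. \<Sum>i\<in>UNIV. c i * (u i $ j))"

definition no_Z_relation :: "('d::finite \<Rightarrow> int ^ 'd) \<Rightarrow> bool" where
  "no_Z_relation u \<longleftrightarrow> (\<forall>c. lincomb u c = 0 \<longrightarrow> (\<forall>i. c i = 0))"

definition Lat :: "('d::finite \<Rightarrow> int ^ 'd) \<Rightarrow> (int ^ 'd) set" where
  "Lat u = {lincomb u c | c. True}"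

definition Pcone :: "('d::finite \<Rightarrow> int ^ 'd) \<Rightarrow> (int ^ 'd) set" where
  "Pcone u = {lincomb u c | c. \<forall>i. c i \<ge> 0}"

definition qmap :: "('d::finite \<Rightarrow> int ^ 'd) \<Rightarrow> int ^ 'd \<Rightarrow> (int ^ 'd) set" where
  "qmap u x = {y. x - y \<in> Lat u}"

definition sumset :: "('a::plus) set \<Rightarrow> 'a set \<Rightarrow> 'a set" where
  "sumset A B = {a + b | a b. a \<in> A \<and> b \<in> B}"

definition coords_le :: "('d::finite \<Rightarrow> int ^ 'd) \<Rightarrow> int ^ 'd \<Rightarrow> real \<Rightarrow> bool" where
  "coords_le u x N \<longleftrightarrow> (\<exists>t::'d \<Rightarrow> rat.
      (\<forall>j. of_int (x $ j) = (\<Sum>i\<in>UNIV. t i * of_int (u i $ j))) \<and> (\<forall>i. of_rat (t i) \<le> N))"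

definition eventually_periodic :: "('d::finite \<Rightarrow> int ^ 'd) \<Rightarrow> (int ^ 'd) set \<Rightarrow> bool" where
  "eventually_periodic u X \<longleftrightarrow> X \<noteq> {} \<and>
     (\<exists>F. finite F \<and> F \<noteq> {} \<and> X \<subseteq> sumset F (Pcone u)) \<and>
     finite {x \<in> X. \<not> ((\<lambda>p. x + p) ` Pcone u \<subseteq> X)}"

definition scrW :: "('d::finite \<Rightarrow> int ^ 'd) \<Rightarrow> (int ^ 'd) set \<Rightarrow> (int ^ 'd) set" where
  "scrW u W = {w \<in> W. \<not> ((\<lambda>p. w + p) ` Pcone u \<subseteq> W)}"

definition calW :: "('d::finite \<Rightarrow> int ^ 'd) \<Rightarrow> (int ^ 'd) set \<Rightarrow> (int ^ 'd) set" where
  "calW u W = {w \<in> W - scrW u W. (\<lambda>p. w - p) ` Pcone u \<inter> (W - scrW u W) = {w}}"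

definition scrW1 :: "('d::finite \<Rightarrow> int ^ 'd) \<Rightarrow> (int ^ 'd) set \<Rightarrow> (int ^ 'd) set" where
  "scrW1 u W = {w \<in> scrW u W. \<forall>w' \<in> calW u W. qmap u w \<noteq> qmap u w'}"

definition is_complement :: "('a::plus) set \<Rightarrow> 'a set \<Rightarrow> bool" where
  "is_complement M W \<longleftrightarrow> M \<noteq> {} \<and> sumset M W = UNIV"

definition is_minimal_complement :: "('a::plus) set \<Rightarrow> 'a set \<Rightarrow> bool" where
  "is_minimal_complement M W \<longleftrightarrow> is_complement M W \<and> (\<forall>M'. M' \<subset> M \<longrightarrow> \<not> is_complement M' W)"

definition Minf :: "('d::finite \<Rightarrow> int ^ 'd) \<Rightarrow> (int ^ 'd) set \<Rightarrow> (int ^ 'd) set" where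
  "Minf u M = \<Union>{M \<inter> qmap u -` {v} | v. v \<in> range (qmap u) \<and>
        (\<forall>N::real. \<exists>x \<in> M \<inter> qmap u -` {v}. coords_le u x N)}"

end

theory Submission
  imports Defs "HOL-Analysis.Cartesian_Space" "HOL-Library.FuncSet"
begin

definition ofv :: "int ^ 'd \<Rightarrow> rat ^ 'd" where "ofv x = (\<chi> j. of_int (x $ j))"
definition qlin :: "('d::finite \<Rightarrow> int ^ 'd) \<Rightarrow> ('d \<Rightarrow> rat) \<Rightarrow> rat ^ 'd" where
  "qlin u t = (\<chi> j. \<Sum>i\<in>UNIV. t i * of_int (u i $ j))"

lemma ofv_inj: "ofv x = ofv y \<Longrightarrow> x = y"
  by (auto simp: ofv_def vec_eq_iff)
lemma ofv_add: "ofv (x + y) = ofv x + ofv y" by (auto simp: ofv_def vec_eq_iff)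
lemma ofv_diff: "ofv (x - y) = ofv x - ofv y" by (auto simp: ofv_def vec_eq_iff)
lemma ofv_0: "ofv 0 = 0" by (auto simp: ofv_def vec_eq_iff)
lemma qlin_add: "qlin u (\<lambda>i. s i + t i) = qlin u s + qlin u t"
  by (auto simp: qlin_def vec_eq_iff algebra_simps sum.distrib)
lemma qlin_diff: "qlin u (\<lambda>i. s i - t i) = qlin u s - qlin u t"
  by (auto simp: qlin_def vec_eq_iff algebra_simps sum_subtractf)
lemma qlin_scale: "qlin u (\<lambda>i. a * t i) = a *s qlin u t"
  by (auto simp: qlin_def vec_eq_iff algebra_simps sum_distrib_left)
lemma ofv_lincomb: "ofv (lincomb u c) = qlin u (\<lambda>i. of_int (c i))"
  by (auto simp: ofv_def qlin_def lincomb_def vec_eq_iff)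
lemma lincomb_add: "lincomb u (\<lambda>i. c i + d i) = lincomb u c + lincomb u d"
  by (auto simp: lincomb_def vec_eq_iff algebra_simps sum.distrib)
lemma lincomb_diff: "lincomb u (\<lambda>i. c i - d i) = lincomb u c - lincomb u d"
  by (auto simp: lincomb_def vec_eq_iff algebra_simps sum_subtractf)
lemma lincomb_0: "lincomb u (\<lambda>i. 0) = 0"
  by (auto simp: lincomb_def vec_eq_iff)

lemma clear_denoms:
  fixes S :: "rat set" assumes "finite S"
  shows "\<exists>D::int. D > 0 \<and> (\<forall>q\<in>S. \<exists>k::int. q * of_int D = of_int k)"
  using assms
proof (induction S rule: finite_induct)
  case empty then show ?case by (intro exI[of _ 1]) auto
next
  case (insert q S)
  then obtain D where D: "D > 0" "\<forall>q\<in>S. \<exists>k::int. q * of_int D = of_int k" by blast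
  obtain a b where ab: "quotient_of q = (a, b)" by (cases "quotient_of q")
  then have b: "b > 0" "q = of_int a / of_int b" using quotient_of_denom_pos quotient_of_div by blast+
  have "\<forall>r\<in>insert q S. \<exists>k::int. r * of_int (D * b) = of_int k"
  proof
    fix r assume r: "r \<in> insert q S"
    show "\<exists>k::int. r * of_int (D * b) = of_int k"
    proof (cases "r = q")
      case True then show ?thesis using b by (intro exI[of _ "a * D"]) auto
    next
      case False
      then obtain k where k: "r * of_int D = of_int k" using D r by blast
      have "r * of_int (D * b) = of_int (k * b)" by (simp flip: k)
      then show ?thesis by blast
    qed
  qed
  then show ?case using D b by (intro exI[of _ "D * b"]) auto
qed

lemma qlin_inj:
  assumes nz: "no_Z_relation u" and "qlin u s = qlin u t"
  shows "s = t"
proof -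
  define r where "r i = s i - t i" for i
  have r0: "qlin u r = 0" using assms(2) qlin_diff[of u s t] unfolding r_def by simp
  obtain D where D: "D > 0" "\<forall>q\<in>range r. \<exists>k::int. q * of_int D = of_int k"
    using clear_denoms[of "range r"] by auto
  then have "\<forall>i. \<exists>k::int. r i * of_int D = of_int k" by blast
  then obtain k where k0: "\<forall>i. r i * of_int D = of_int (k i)" using choice[of "\<lambda>i k. r i * of_int D = of_int k"] by blast
  have k: "\<And>i. r i * of_int D = of_int (k i)" using k0 by blast
  have kk: "(\<lambda>i. of_int (k i) :: rat) = (\<lambda>i. of_int D * r i)"
    using k by (simp add: fun_eq_iff mult.commute)
  have "ofv (lincomb u k) = of_int D *s qlin u r"
    unfolding ofv_lincomb kk qlin_scale ..
  also have "\<dots> = ofv 0" using r0 by (simp add: ofv_0)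
  finally have "lincomb u k = 0" by (rule ofv_inj)
  then have k0: "\<forall>i. k i = 0" using nz unfolding no_Z_relation_def by blast
  have "\<And>i. r i = 0"
  proof -
    fix i have "r i * of_int D = 0" using k[of i] k0 by simp
    then show "r i = 0" using D(1) by simp
  qed
  then show ?thesis unfolding r_def fun_eq_iff by simp
qed

definition UQ :: "('d::finite \<Rightarrow> int ^ 'd) \<Rightarrow> rat ^ 'd ^ 'd" where
  "UQ u = (\<chi> j i. of_int (u i $ j))"

lemma qlin_UQ: "qlin u t = UQ u *v (\<chi> i. t i)"
  by (auto simp: qlin_def UQ_def matrix_vector_mult_def vec_eq_iff mult.commute)

lemma qlin_surj:
  assumes nz: "no_Z_relation u"
  shows "\<exists>t. qlin u t = y"
proof -
  have "inj ((*v) (UQ u))"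
  proof (rule injI)
    fix a b assume "UQ u *v a = UQ u *v b"
    then have "qlin u (\<lambda>i. a $ i) = qlin u (\<lambda>i. b $ i)" by (simp add: qlin_UQ)
    then have "(\<lambda>i. a $ i) = (\<lambda>i. b $ i)" using qlin_inj[OF nz] by blast
    then show "a = b" by (simp add: vec_eq_iff fun_eq_iff)
  qed
  then have "surj ((*v) (UQ u))"
    using vec.linear_inj_imp_surj[OF matrix_vector_mul_linear_gen] by blast
  then obtain a where "UQ u *v a = y" by (metis surjD)
  then show ?thesis by (intro exI[of _ "\<lambda>i. a $ i"]) (simp add: qlin_UQ)
qed


definition rc :: "('d::finite \<Rightarrow> int ^ 'd) \<Rightarrow> int ^ 'd \<Rightarrow> 'd \<Rightarrow> rat" where
  "rc u x = (SOME t. qlin u t = ofv x)"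

context fixes u :: "'d::finite \<Rightarrow> int ^ 'd" assumes nz: "no_Z_relation u"
begin

lemma rc: "qlin u (rc u x) = ofv x"
proof -
  have "\<exists>t. qlin u t = ofv x" by (rule qlin_surj[OF nz])
  then show ?thesis unfolding rc_def by (rule someI_ex)
qed

lemma rc_unique: "qlin u t = ofv x \<Longrightarrow> rc u x = t"
proof -
  assume h: "qlin u t = ofv x"
  have "qlin u (rc u x) = qlin u t" using rc h by simp
  then show ?thesis by (rule qlin_inj[OF nz])
qed

lemma rc_add: "rc u (x + y) = (\<lambda>i. rc u x i + rc u y i)"
  by (rule rc_unique) (simp add: qlin_add rc ofv_add)

lemma rc_diff: "rc u (x - y) = (\<lambda>i. rc u x i - rc u y i)"
  by (rule rc_unique) (simp add: qlin_diff rc ofv_diff)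

lemma rc_lincomb: "rc u (lincomb u c) = (\<lambda>i. of_int (c i))"
  by (rule rc_unique) (simp add: ofv_lincomb)

lemma coords_le_iff: "coords_le u x N \<longleftrightarrow> (\<forall>i. of_rat (rc u x i) \<le> N)"
proof -
  have "(\<forall>j. of_int (x $ j) = (\<Sum>i\<in>UNIV. t i * of_int (u i $ j))) \<longleftrightarrow> qlin u t = ofv x" for t
    by (auto simp: qlin_def ofv_def vec_eq_iff)
  then have "coords_le u x N \<longleftrightarrow> (\<exists>t. qlin u t = ofv x \<and> (\<forall>i. of_rat (t i) \<le> N))"
    unfolding coords_le_def by simp
  also have "\<dots> \<longleftrightarrow> (\<forall>i. of_rat (rc u x i) \<le> N)"
  proof
    assume "\<exists>t. qlin u t = ofv x \<and> (\<forall>i. of_rat (t i) \<le> N)"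
    then obtain t where "qlin u t = ofv x" "\<forall>i. of_rat (t i) \<le> N" by blast
    then show "\<forall>i. of_rat (rc u x i) \<le> N" using rc_unique by simp
  next
    assume "\<forall>i. of_rat (rc u x i) \<le> N"
    then show "\<exists>t. qlin u t = ofv x \<and> (\<forall>i. of_rat (t i) \<le> N)" using rc by blast
  qed
  finally show ?thesis .
qed

end

lemma Lat_lincomb: "lincomb u c \<in> Lat u" unfolding Lat_def by blast
lemma Lat_add: "x \<in> Lat u \<Longrightarrow> y \<in> Lat u \<Longrightarrow> x + y \<in> Lat u"
proof -
  assume "x \<in> Lat u" "y \<in> Lat u"
  then obtain c d where "x = lincomb u c" "y = lincomb u d" unfolding Lat_def by blast
  then have "x + y = lincomb u (\<lambda>i. c i + d i)" by (simp add: lincomb_add)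
  then show ?thesis by (simp add: Lat_lincomb)
qed
lemma Lat_diff: "x \<in> Lat u \<Longrightarrow> y \<in> Lat u \<Longrightarrow> x - y \<in> Lat u"
proof -
  assume "x \<in> Lat u" "y \<in> Lat u"
  then obtain c d where "x = lincomb u c" "y = lincomb u d" unfolding Lat_def by blast
  then have "x - y = lincomb u (\<lambda>i. c i - d i)" by (simp add: lincomb_diff)
  then show ?thesis by (simp add: Lat_lincomb)
qed
lemma Lat_0: "0 \<in> Lat u"
  using Lat_lincomb[of u "\<lambda>i. 0"] by (simp add: lincomb_0)

lemma qmap_eq: "qmap u x = qmap u y \<longleftrightarrow> x - y \<in> Lat u"
proof
  assume "qmap u x = qmap u y"
  moreover have "y \<in> qmap u y" by (simp add: qmap_def Lat_0)
  ultimately have "y \<in> qmap u x" by simp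
  then show "x - y \<in> Lat u" by (simp add: qmap_def)
next
  assume h: "x - y \<in> Lat u"
  show "qmap u x = qmap u y"
  proof (auto simp: qmap_def)
    fix z assume "x - z \<in> Lat u"
    from Lat_diff[OF this h] show "y - z \<in> Lat u" by simp
  next
    fix z assume "y - z \<in> Lat u"
    from Lat_add[OF h this] show "x - z \<in> Lat u" by simp
  qed
qed

lemma Pcone_lincomb: "(\<And>i. c i \<ge> 0) \<Longrightarrow> lincomb u c \<in> Pcone u"
  unfolding Pcone_def by blast

lemma Minf_iff: "x \<in> Minf u M \<longleftrightarrow> x \<in> M \<and> (\<forall>N. \<exists>y\<in>M. qmap u y = qmap u x \<and> coords_le u y N)"
proof
  assume "x \<in> Minf u M"
  then obtain v where v: "x \<in> M" "qmap u x = v" "\<forall>N. \<exists>y\<in>M \<inter> qmap u -` {v}. coords_le u y N"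
    unfolding Minf_def by auto
  then show "x \<in> M \<and> (\<forall>N. \<exists>y\<in>M. qmap u y = qmap u x \<and> coords_le u y N)" by auto
next
  assume h: "x \<in> M \<and> (\<forall>N. \<exists>y\<in>M. qmap u y = qmap u x \<and> coords_le u y N)"
  have "x \<in> M \<inter> qmap u -` {qmap u x}" using h by auto
  moreover have "\<forall>N. \<exists>y\<in>M \<inter> qmap u -` {qmap u x}. coords_le u y N"
  proof
    fix N
    obtain y where "y \<in> M" "qmap u y = qmap u x" "coords_le u y N" using h by blast
    then show "\<exists>y\<in>M \<inter> qmap u -` {qmap u x}. coords_le u y N" by blast
  qed
  ultimately show "x \<in> Minf u M" unfolding Minf_def by blast
qed


context fixes u :: "'d::finite \<Rightarrow> int ^ 'd" assumes nz: "no_Z_relation u"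
begin

lemma rc_expand:
  defines "e \<equiv> (\<lambda>j::'d. (\<chi> k. if k = j then 1 else 0) :: int ^ 'd)"
  shows "rc u x = (\<lambda>i. \<Sum>j\<in>UNIV. of_int (x $ j) * rc u (e j) i)"
proof (rule rc_unique[OF nz])
  have "qlin u (\<lambda>i. \<Sum>j\<in>UNIV. of_int (x $ j) * rc u (e j) i) $ k = ofv x $ k" for k
  proof -
    have "qlin u (\<lambda>i. \<Sum>j\<in>UNIV. of_int (x $ j) * rc u (e j) i) $ k
        = (\<Sum>i\<in>UNIV. (\<Sum>j\<in>UNIV. of_int (x $ j) * rc u (e j) i) * of_int (u i $ k))"
      by (simp add: qlin_def)
    also have "\<dots> = (\<Sum>j\<in>UNIV. of_int (x $ j) * (\<Sum>i\<in>UNIV. rc u (e j) i * of_int (u i $ k)))"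
      by (simp add: sum_distrib_left sum_distrib_right mult.assoc) (rule sum.swap)
    also have "\<dots> = (\<Sum>j\<in>UNIV. of_int (x $ j) * (ofv (e j) $ k))"
    proof -
      have "(\<Sum>i\<in>UNIV. rc u (e j) i * of_int (u i $ k)) = ofv (e j) $ k" for j
        using arg_cong[OF rc[OF nz, of "e j"], of "\<lambda>v. v $ k"] by (simp add: qlin_def)
      then show ?thesis by simp
    qed
    also have "\<dots> = ofv x $ k"
      by (simp add: e_def ofv_def if_distrib cong: if_cong)
    finally show ?thesis .
  qed
  then show "qlin u (\<lambda>i. \<Sum>j\<in>UNIV. of_int (x $ j) * rc u (e j) i) = ofv x"
    by (simp add: vec_eq_iff)
qed

lemma rc_denom: "\<exists>D::int. D > 0 \<and> (\<forall>x i. \<exists>k::int. rc u x i * of_int D = of_int k)"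
proof -
  define e where "e = (\<lambda>j::'d. (\<chi> k. if k = j then 1 else 0) :: int ^ 'd)"
  obtain D where D: "D > 0" "\<forall>q\<in>(\<lambda>(i,j). rc u (e j) i) ` UNIV. \<exists>k::int. q * of_int D = of_int k"
    using clear_denoms[of "(\<lambda>(i,j). rc u (e j) i) ` UNIV", OF finite_imageI[OF finite]] by blast
  have "\<forall>ij. \<exists>k::int. rc u (e (snd ij)) (fst ij) * of_int D = of_int k"
  proof
    fix ij :: "'d \<times> 'd"
    have "rc u (e (snd ij)) (fst ij) \<in> (\<lambda>(i,j). rc u (e j) i) ` UNIV"
      by (rule image_eqI[of _ _ ij]) (auto simp: case_prod_beta)
    then show "\<exists>k::int. rc u (e (snd ij)) (fst ij) * of_int D = of_int k" using D(2) by blast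
  qed
  then obtain K where K: "\<forall>ij. rc u (e (snd ij)) (fst ij) * of_int D = of_int (K ij)"
    using choice[of "\<lambda>ij k. rc u (e (snd ij)) (fst ij) * of_int D = of_int k"] by blast
  have "\<exists>k::int. rc u x i * of_int D = of_int k" for x i
  proof -
    have ex: "rc u x i = (\<Sum>j\<in>UNIV. of_int (x $ j) * rc u (e j) i)"
      using fun_cong[OF rc_expand[of x], of i] unfolding e_def by simp
    have "rc u x i * of_int D = (\<Sum>j\<in>UNIV. of_int (x $ j) * (rc u (e j) i * of_int D))"
      unfolding ex by (simp add: sum_distrib_right mult.assoc)
    also have "\<dots> = of_int (\<Sum>j\<in>UNIV. x $ j * K (i, j))"
      using K by simp
    finally show ?thesis by blast
  qed
  then show ?thesis using D(1) by blast
qed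

lemma finite_qmap: "finite (range (qmap u))"
proof -
  obtain D where D: "D > 0" "\<And>x i. \<exists>k::int. rc u x i * of_int D = of_int k"
    using rc_denom by blast
  define g where "g x i = \<lfloor>rc u x i * of_int D\<rfloor>" for x i
  have g: "of_int (g x i) = rc u x i * of_int D" for x i
    using D(2)[of x i] unfolding g_def by auto
  define \<phi> where "\<phi> x = (\<lambda>i. g x i mod D)" for x
  have eq: "qmap u x = qmap u y" if "\<phi> x = \<phi> y" for x y
  proof -
    have "\<forall>i. \<exists>q. g x i - g y i = D * q"
    proof
      fix i have "g x i mod D = g y i mod D" using that unfolding \<phi>_def by metis
      then have "D dvd g x i - g y i" by (simp add: mod_eq_dvd_iff)
      then show "\<exists>q. g x i - g y i = D * q" by (auto simp: dvd_def)
    qed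
    then obtain q where q: "\<forall>i. g x i - g y i = D * q i"
      using choice[of "\<lambda>i q. g x i - g y i = D * q"] by blast
    have "rc u (x - y) i = of_int (q i)" for i
    proof -
      have "rc u (x - y) i * of_int D = of_int (g x i - g y i)"
        by (simp add: rc_diff[OF nz] g left_diff_distrib)
      also have "\<dots> = of_int (q i) * of_int D" using q by simp
      finally show ?thesis using D(1) by simp
    qed
    then have "rc u (x - y) = rc u (lincomb u q)" by (simp add: rc_lincomb[OF nz] fun_eq_iff)
    then have "ofv (x - y) = ofv (lincomb u q)" by (metis rc[OF nz])
    then have "x - y = lincomb u q" by (rule ofv_inj)
    then show ?thesis by (simp add: qmap_eq Lat_lincomb)
  qed
  have fin: "finite (range \<phi>)"
  proof (rule finite_subset)
    show "range \<phi> \<subseteq> Pi\<^sub>E UNIV (\<lambda>_. {0..<D})"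
      using D(1) by (auto simp: PiE_UNIV_domain \<phi>_def)
    show "finite (Pi\<^sub>E UNIV (\<lambda>_::'d. {0..<D}))" by (rule finite_PiE) auto
  qed
  have "range (qmap u) = (\<lambda>c. qmap u (SOME x. \<phi> x = c)) ` range \<phi>"
  proof (auto)
    fix x
    have "\<phi> (SOME y. \<phi> y = \<phi> x) = \<phi> x" by (rule someI) rule
    then have "qmap u x = qmap u (SOME y. \<phi> y = \<phi> x)" using eq by metis
    then show "qmap u x \<in> (\<lambda>c. qmap u (SOME x. \<phi> x = c)) ` range \<phi>" by blast
  qed
  then show ?thesis using fin by simp
qed

end

context fixes u :: "'d::finite \<Rightarrow> int ^ 'd" assumes nz: "no_Z_relation u"
begin

lemma Pcone_rc: "p \<in> Pcone u \<Longrightarrow> \<exists>c. p = lincomb u c \<and> (\<forall>i. c i \<ge> 0)"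
  unfolding Pcone_def by blast

lemma to_calW:
  assumes F: "finite F" "W \<subseteq> sumset F (Pcone u)" and w: "w \<in> W - scrW u W"
  shows "\<exists>w0\<in>calW u W. w - w0 \<in> Pcone u"
proof -
  define S where "S = {c. (\<forall>i. c i \<ge> 0) \<and> w - lincomb u c \<in> W - scrW u W}"
  define B :: rat where "B = (\<Sum>f\<in>F. \<Sum>i\<in>UNIV. \<bar>rc u w i - rc u f i\<bar>)"
  have bound: "c i \<le> \<lceil>B\<rceil>" if "c \<in> S" for c i
  proof -
    have "w - lincomb u c \<in> W" using that unfolding S_def by blast
    then obtain f p where fp: "f \<in> F" "p \<in> Pcone u" "w - lincomb u c = f + p"
      using F(2) unfolding sumset_def by blast
    obtain c' where c': "p = lincomb u c'" "\<forall>i. c' i \<ge> 0" using Pcone_rc[OF fp(2)] by blast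
    have "rc u (w - lincomb u c) i = rc u (f + p) i" using fp(3) by simp
    then have "rc u w i - of_int (c i) = rc u f i + of_int (c' i)"
      using c'(1) by (simp add: rc_diff[OF nz] rc_add[OF nz] rc_lincomb[OF nz])
    then have "of_int (c i) \<le> rc u w i - rc u f i" using c'(2)[rule_format, of i] by linarith
    also have "\<dots> \<le> \<bar>rc u w i - rc u f i\<bar>" by simp
    also have "\<dots> \<le> (\<Sum>i\<in>UNIV. \<bar>rc u w i - rc u f i\<bar>)"
      by (rule member_le_sum) auto
    also have "\<dots> \<le> B" unfolding B_def
      by (rule member_le_sum[OF fp(1)]) (auto intro: sum_nonneg simp: F(1))
    also have "\<dots> \<le> of_int \<lceil>B\<rceil>" by simp
    finally show ?thesis by linarith
  qed
  have finS: "finite S"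
  proof (rule finite_subset)
    show "S \<subseteq> Pi\<^sub>E UNIV (\<lambda>_. {0..\<lceil>B\<rceil>})"
      using bound by (auto simp: PiE_UNIV_domain S_def)
    show "finite (Pi\<^sub>E UNIV (\<lambda>_::'d. {0..\<lceil>B\<rceil>}))" by (rule finite_PiE) auto
  qed
  have "(\<lambda>i. 0) \<in> S" using w by (simp add: S_def lincomb_0)
  then have neS: "S \<noteq> {}" by blast
  define V where "V = (\<lambda>c. \<Sum>i\<in>UNIV. c i) ` S"
  have finV: "finite V" "V \<noteq> {}" using finS neS unfolding V_def by auto
  then have "Max V \<in> V" by (rule Max_in)
  then obtain c where c1: "Max V = (\<Sum>i\<in>UNIV. c i)" and c0: "c \<in> S" unfolding V_def by (rule imageE)
  have c: "c \<in> S" "(\<Sum>i\<in>UNIV. c i) = Max V" using c0 c1 by auto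
  have maxc: "(\<Sum>i\<in>UNIV. c' i) \<le> (\<Sum>i\<in>UNIV. c i)" if "c' \<in> S" for c'
    using c(2) Max_ge[OF finV(1)] that unfolding V_def by auto
  define w0 where "w0 = w - lincomb u c"
  have w0: "w0 \<in> W - scrW u W" using c(1) unfolding S_def w0_def by blast
  have "w0 \<in> calW u W"
  proof -
    have "(\<lambda>p. w0 - p) ` Pcone u \<inter> (W - scrW u W) = {w0}"
    proof
      show "{w0} \<subseteq> (\<lambda>p. w0 - p) ` Pcone u \<inter> (W - scrW u W)"
      proof -
        have "lincomb u (\<lambda>i. 0) \<in> Pcone u" by (rule Pcone_lincomb) simp
        then have "w0 \<in> (\<lambda>p. w0 - p) ` Pcone u" by (force simp: lincomb_0)
        then show ?thesis using w0 by blast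
      qed
    next
      show "(\<lambda>p. w0 - p) ` Pcone u \<inter> (W - scrW u W) \<subseteq> {w0}"
      proof
        fix y assume y: "y \<in> (\<lambda>p. w0 - p) ` Pcone u \<inter> (W - scrW u W)"
        then obtain p where p: "p \<in> Pcone u" "y = w0 - p" by blast
        obtain c' where c': "p = lincomb u c'" "\<forall>i. c' i \<ge> 0" using Pcone_rc[OF p(1)] by blast
        have "w - lincomb u (\<lambda>i. c i + c' i) = y"
          using p(2) c'(1) unfolding w0_def by (simp add: lincomb_add)
        then have "(\<lambda>i. c i + c' i) \<in> S" using y c'(2) c(1) unfolding S_def by auto
        then have "(\<Sum>i\<in>UNIV. c i + c' i) \<le> (\<Sum>i\<in>UNIV. c i)" by (rule maxc)
        then have "(\<Sum>i\<in>UNIV. c' i) \<le> 0" by (simp add: sum.distrib)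
        then have "(\<Sum>i\<in>UNIV. c' i) = 0" using c'(2) by (meson sum_nonneg order.antisym)
        then have "\<forall>i. c' i = 0" using c'(2) by (simp add: sum_nonneg_eq_0_iff)
        then have "p = 0" using c'(1) lincomb_0[of u] by (metis (no_types) fun_eq_iff)
        then show "y \<in> {w0}" using p(2) by simp
      qed
    qed
    then show ?thesis using w0 unfolding calW_def by blast
  qed
  moreover have "w - w0 \<in> Pcone u"
    unfolding w0_def using c(1) by (auto simp: S_def intro: Pcone_lincomb)
  ultimately show ?thesis by blast
qed

lemma key:
  assumes m': "m' \<in> Minf u M" and z: "qmap u z = qmap u m'"
    and w': "w' \<in> W" "(\<lambda>p. w' + p) ` Pcone u \<subseteq> W"
  shows "z + w' \<in> sumset (M - {m0}) W"
proof -
  define N :: real where "N = - (\<Sum>i\<in>UNIV. \<bar>of_rat (rc u z i)\<bar> + \<bar>of_rat (rc u m0 i)\<bar>) - 1"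
  have N1: "N \<le> of_rat (rc u z i)" and N2: "N < of_rat (rc u m0 i)" for i
  proof -
    have a: "\<bar>of_rat (rc u z i)\<bar> + \<bar>of_rat (rc u m0 i)\<bar> \<le> (\<Sum>i\<in>UNIV. \<bar>of_rat (rc u z i)\<bar> + \<bar>of_rat (rc u m0 i) :: real\<bar>)"
      by (rule member_le_sum) auto
    show "N \<le> of_rat (rc u z i)" using a unfolding N_def by linarith
    show "N < of_rat (rc u m0 i)" using a unfolding N_def by linarith
  qed
  obtain m1 where m1: "m1 \<in> M" "qmap u m1 = qmap u m'" "coords_le u m1 N"
    using m' unfolding Minf_iff by blast
  have m1c: "of_rat (rc u m1 i) \<le> N" for i using m1(3) coords_le_iff[OF nz] by blast
  have "m1 \<noteq> m0" using m1c[of undefined] N2[of undefined] by auto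
  have "z - m1 \<in> Lat u" using z m1(2) by (simp add: qmap_eq[symmetric])
  then obtain k where k: "z - m1 = lincomb u k" unfolding Lat_def by blast
  have "k i \<ge> 0" for i
  proof -
    have "rc u (z - m1) i = of_int (k i)" using k by (simp add: rc_lincomb[OF nz])
    then have "rc u z i - rc u m1 i = of_int (k i)" by (simp add: rc_diff[OF nz])
    then have "of_rat (rc u z i) - of_rat (rc u m1 i) = (of_int (k i) :: real)"
      by (metis of_rat_diff of_rat_of_int_eq)
    then show ?thesis using N1[of i] m1c[of i] by linarith
  qed
  then have "lincomb u k \<in> Pcone u" by (intro Pcone_lincomb) auto
  then have "w' + lincomb u k \<in> W" using w'(2) by blast
  moreover have "z + w' = m1 + (w' + lincomb u k)" using k by (simp add: algebra_simps)
  ultimately show ?thesis using m1(1) \<open>m1 \<noteq> m0\<close> unfolding sumset_def by blast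
qed

end

lemma Pcone_Lat: "p \<in> Pcone u \<Longrightarrow> p \<in> Lat u"
  unfolding Pcone_def Lat_def by blast

lemma qmap_eqI: "x - y \<in> Lat u \<Longrightarrow> qmap u x = qmap u y"
  using qmap_eq by blast

lemma qmap_eqD: "qmap u x = qmap u y \<Longrightarrow> x - y \<in> Lat u"
  using qmap_eq by blast

lemma aux_r: "e = (a - b) - of_int (K + c) \<Longrightarrow> (of_rat e :: real) = of_rat (a - b) - of_int K - of_int c"
  by (simp add: of_rat_diff of_rat_add)

lemma aux_lin: "(r::real) = A - k - ci \<Longrightarrow> A \<le> S \<Longrightarrow> S + n \<le> B \<Longrightarrow> B \<le> k \<Longrightarrow> 0 \<le> ci \<Longrightarrow> -N \<le> n \<Longrightarrow> r \<le> N"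
  by linarith

theorem theorem4p9:
  fixes u :: "'d::finite \<Rightarrow> int ^ 'd"
    and W M calM :: "(int ^ 'd) set"
  assumes "no_Z_relation u"
    and "eventually_periodic u W"
    and "is_minimal_complement M W"
    and "calM \<subseteq> Minf u M"
    and "bij_betw (qmap u) calM (qmap u ` Minf u M)"
  shows "infinite (Minf u M) \<and> calM \<noteq> {} \<and> finite calM \<and> scrW1 u W \<noteq> {} \<and>
         qmap u ` sumset calM (calW u W \<union> scrW1 u W) = range (qmap u) \<and>
         (\<forall>m \<in> calM. \<exists>w \<in> scrW1 u W. \<forall>m' \<in> calM. \<forall>w' \<in> calW u W.
           qmap u (m + w) \<noteq> qmap u (m' + w'))"
proof -
  note nz = assms(1)
  obtain F where F: "finite F" "W \<subseteq> sumset F (Pcone u)"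
    using assms(2) unfolding eventually_periodic_def by blast
  have MW: "sumset M W = UNIV" using assms(3) unfolding is_minimal_complement_def is_complement_def by blast
  have minim: "\<And>M'. M' \<subset> M \<Longrightarrow> \<not> is_complement M' W"
    using assms(3) unfolding is_minimal_complement_def by blast
  have imgM: "qmap u ` calM = qmap u ` Minf u M" using assms(5) by (rule bij_betw_imp_surj_on)
  have MinfM: "Minf u M \<subseteq> M"
  proof
    fix x assume "x \<in> Minf u M" then show "x \<in> M" unfolding Minf_iff by (rule conjunct1)
  qed

  have cls: "\<exists>w'\<in>calW u W \<union> scrW1 u W. qmap u w' = qmap u w" if w: "w \<in> W" for w
  proof (cases "w \<in> scrW u W")
    case True
    show ?thesis
    proof (cases "\<exists>w'\<in>calW u W. qmap u w = qmap u w'")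
      case True then show ?thesis by auto
    next
      case False
      then have "w \<in> scrW1 u W" using \<open>w \<in> scrW u W\<close> unfolding scrW1_def by blast
      then show ?thesis by blast
    qed
  next
    case False
    then obtain w0 where "w0 \<in> calW u W" "w - w0 \<in> Pcone u" using to_calW[OF nz F] w by blast
    then show ?thesis using qmap_eqI[OF Pcone_Lat] by blast
  qed

  have cover: "\<exists>m\<in>calM. \<exists>w\<in>calW u W \<union> scrW1 u W. qmap u (m + w) = qmap u y" for y
  proof -
    have "\<exists>f\<in>F. (\<exists>w\<in>W. qmap u w = qmap u f) \<and> (\<forall>N. \<exists>x\<in>M. qmap u x = qmap u (y - f) \<and> coords_le u x N)"
    proof (rule ccontr)
      assume "\<not> ?thesis"
      then have nf: "\<And>f. f \<in> F \<Longrightarrow> \<not> ((\<exists>w\<in>W. qmap u w = qmap u f) \<and> (\<forall>N. \<exists>x\<in>M. qmap u x = qmap u (y - f) \<and> coords_le u x N))"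
        by blast
      have hN: "\<forall>f\<in>F. \<exists>N. (\<exists>w\<in>W. qmap u w = qmap u f) \<longrightarrow> (\<forall>x\<in>M. qmap u x = qmap u (y - f) \<longrightarrow> \<not> coords_le u x N)"
      proof
        fix f assume "f \<in> F"
        note nf[OF this]
        then show "\<exists>N. (\<exists>w\<in>W. qmap u w = qmap u f) \<longrightarrow> (\<forall>x\<in>M. qmap u x = qmap u (y - f) \<longrightarrow> \<not> coords_le u x N)"
          by blast
      qed
      obtain Nf where Nf: "\<forall>f\<in>F. (\<exists>w\<in>W. qmap u w = qmap u f) \<longrightarrow> (\<forall>x\<in>M. qmap u x = qmap u (y - f) \<longrightarrow> \<not> coords_le u x (Nf f))"
        using bchoice[OF hN] by blast
      define B :: real where "B = (\<Sum>f\<in>F. (\<Sum>i\<in>UNIV. \<bar>of_rat (rc u y i - rc u f i)\<bar>) + \<bar>Nf f\<bar>)"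
      define K where "K = \<lceil>B\<rceil>"
      define x0 where "x0 = y - lincomb u (\<lambda>i. K)"
      have "x0 \<in> sumset M W" using MW by simp
      then obtain m w where mw: "m \<in> M" "w \<in> W" "x0 = m + w" unfolding sumset_def by blast
      then obtain f p where fp: "f \<in> F" "p \<in> Pcone u" "w = f + p" using F(2) unfolding sumset_def by blast
      obtain c where c: "p = lincomb u c" "\<forall>i. c i \<ge> 0" using Pcone_rc[OF nz fp(2)] by blast
      have "qmap u w = qmap u f" using fp by (intro qmap_eqI) (simp add: Pcone_Lat)
      then have notc: "\<forall>x\<in>M. qmap u x = qmap u (y - f) \<longrightarrow> \<not> coords_le u x (Nf f)"
        using Nf fp(1) mw(2) by blast
      have "m = x0 - w" using mw(3) by simp
      also have "\<dots> = (y - f) - (lincomb u (\<lambda>i. K) + lincomb u c)"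
        unfolding x0_def fp(3) c(1) by (simp add: algebra_simps)
      also have "\<dots> = (y - f) - lincomb u (\<lambda>i. K + c i)" by (simp add: lincomb_add)
      finally have meq: "m = (y - f) - lincomb u (\<lambda>i. K + c i)" .
      have "qmap u m = qmap u (y - f)"
        using meq Lat_diff[OF Lat_0 Lat_lincomb[of u "\<lambda>i. K + c i"]] by (intro qmap_eqI) simp
      moreover have "coords_le u m (Nf f)"
        unfolding coords_le_iff[OF nz]
      proof
        fix i
        have e1: "rc u m = (\<lambda>i. rc u (y - f) i - rc u (lincomb u (\<lambda>i. K + c i)) i)"
          unfolding meq by (rule rc_diff[OF nz])
        have e2: "rc u m i = (rc u y i - rc u f i) - of_int (K + c i)"
          unfolding e1 rc_lincomb[OF nz] rc_diff[OF nz] by simp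
        have r: "of_rat (rc u m i) = (of_rat (rc u y i - rc u f i) :: real) - of_int K - of_int (c i)"
          by (rule aux_r[OF e2])
        have s1: "of_rat (rc u y i - rc u f i) \<le> (\<Sum>i\<in>UNIV. \<bar>of_rat (rc u y i - rc u f i) :: real\<bar>)"
        proof -
          have "\<bar>of_rat (rc u y i - rc u f i) :: real\<bar> \<le> (\<Sum>i\<in>UNIV. \<bar>of_rat (rc u y i - rc u f i) :: real\<bar>)"
            by (rule member_le_sum) auto
          then show ?thesis by linarith
        qed
        have s2: "(\<Sum>i\<in>UNIV. \<bar>of_rat (rc u y i - rc u f i) :: real\<bar>) + \<bar>Nf f\<bar> \<le> B"
          unfolding B_def by (rule member_le_sum[OF fp(1)]) (auto intro!: add_nonneg_nonneg sum_nonneg simp: F(1))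
        have "B \<le> of_int K" unfolding K_def by simp
        moreover have "0 \<le> (of_int (c i) :: real)" using c(2) by simp
        moreover have "- Nf f \<le> \<bar>Nf f\<bar>" by simp
        ultimately show "of_rat (rc u m i) \<le> Nf f" using aux_lin[OF r s1 s2 \<open>B \<le> of_int K\<close>] by blast
      qed
      ultimately show False using notc mw(1) by blast
    qed
    then obtain f w where f: "f \<in> F" "w \<in> W" "qmap u w = qmap u f"
      and fN: "\<forall>N. \<exists>x\<in>M. qmap u x = qmap u (y - f) \<and> coords_le u x N" by blast
    obtain m0 where m0: "m0 \<in> M" "qmap u m0 = qmap u (y - f)" using fN by blast
    have "\<forall>N. \<exists>x\<in>M. qmap u x = qmap u m0 \<and> coords_le u x N" using fN m0(2) by simp
    then have "m0 \<in> Minf u M" by (simp add: Minf_iff m0(1))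
    then have "qmap u m0 \<in> qmap u ` calM" using imgM by blast
    then obtain m where m2: "qmap u m0 = qmap u m" and m1: "m \<in> calM" by (rule imageE)
    have m: "m \<in> calM" "qmap u m = qmap u m0" using m1 m2 by auto
    obtain w' where w': "w' \<in> calW u W \<union> scrW1 u W" "qmap u w' = qmap u w" using cls[OF f(2)] by blast
    have "(m + w') - y = (m - m0) + ((w' - w) + ((m0 - (y - f)) + (w - f)))" by (simp add: algebra_simps)
    also have "\<dots> \<in> Lat u"
      using m(2) w'(2) m0(2) f(3) by (intro Lat_add qmap_eqD) auto
    finally have "qmap u (m + w') = qmap u y" by (rule qmap_eqI)
    then show ?thesis using m(1) w'(1) by blast
  qed

  have calM_ne: "calM \<noteq> {}" using cover[of 0] by blast
  have Minf_ne: "Minf u M \<noteq> {}" using calM_ne assms(4) by blast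

  have inf: "infinite (Minf u M)"
  proof
    assume fin: "finite (Minf u M)"
    obtain m where m: "m \<in> Minf u M" using Minf_ne by blast
    define N :: real where "N = - (\<Sum>x\<in>Minf u M. \<Sum>i\<in>UNIV. \<bar>of_rat (rc u x i)\<bar>) - 1"
    obtain x where x: "x \<in> M" "qmap u x = qmap u m" "coords_le u x N" using m unfolding Minf_iff by blast
    have "\<forall>N. \<exists>z\<in>M. qmap u z = qmap u m \<and> coords_le u z N" using m unfolding Minf_iff by blast
    then have "\<forall>N. \<exists>z\<in>M. qmap u z = qmap u x \<and> coords_le u z N" using x(2) by simp
    then have "x \<in> Minf u M" by (simp add: Minf_iff x(1))
    have xi: "of_rat (rc u x i) \<le> N" for i using x(3) coords_le_iff[OF nz] by blast
    have "\<bar>of_rat (rc u x undefined)\<bar> \<le> (\<Sum>i\<in>UNIV. \<bar>of_rat (rc u x i) :: real\<bar>)"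
      by (rule member_le_sum) auto
    also have "\<dots> \<le> (\<Sum>x\<in>Minf u M. \<Sum>i\<in>UNIV. \<bar>of_rat (rc u x i) :: real\<bar>)"
      by (rule member_le_sum[OF \<open>x \<in> Minf u M\<close>]) (auto intro: sum_nonneg simp: fin)
    finally show False using xi[of undefined] unfolding N_def by linarith
  qed

  have finM: "finite calM"
  proof -
    have "finite (qmap u ` Minf u M)" by (rule finite_subset[OF _ finite_qmap[OF nz]]) auto
    then show ?thesis using bij_betw_finite[OF assms(5)] by blast
  qed

  have part2: "\<exists>w \<in> scrW1 u W. \<forall>m' \<in> calM. \<forall>w' \<in> calW u W. qmap u (m + w) \<noteq> qmap u (m' + w')"
    if m: "m \<in> calM" for m
  proof -
    have mM: "m \<in> Minf u M" "m \<in> M" using m assms(4) MinfM by auto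
    have "M - {m} \<subset> M" using mM by blast
    then have "\<not> is_complement (M - {m}) W" by (rule minim)
    have "\<exists>x. x \<notin> sumset (M - {m}) W"
    proof (cases "M - {m} = {}")
      case True then show ?thesis unfolding True sumset_def by simp
    next
      case False
      then have "sumset (M - {m}) W \<noteq> UNIV" using \<open>\<not> is_complement (M - {m}) W\<close>
        unfolding is_complement_def by blast
      then show ?thesis by blast
    qed
    then obtain x where x: "x \<notin> sumset (M - {m}) W" by blast
    have "x \<in> sumset M W" using MW by simp
    then obtain m1 w where mw: "m1 \<in> M" "w \<in> W" "x = m1 + w" unfolding sumset_def by blast
    have "m1 = m" using x mw unfolding sumset_def by blast
    have wS: "w \<in> scrW u W"
    proof (rule ccontr)
      assume "w \<notin> scrW u W"
      then have "(\<lambda>p. w + p) ` Pcone u \<subseteq> W" using mw(2) unfolding scrW_def by blast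
      from key[OF nz mM(1) refl mw(2) this, of m] show False using x mw(3) \<open>m1 = m\<close> by simp
    qed
    have calW_sub: "w' \<in> W" "(\<lambda>p. w' + p) ` Pcone u \<subseteq> W" if "w' \<in> calW u W" for w'
    proof -
      have "w' \<in> W - scrW u W" using that unfolding calW_def by blast
      then show "w' \<in> W" "(\<lambda>p. w' + p) ` Pcone u \<subseteq> W" unfolding scrW_def by auto
    qed
    have "\<forall>w'\<in>calW u W. qmap u w \<noteq> qmap u w'"
    proof (intro ballI notI)
      fix w' assume w': "w' \<in> calW u W" "qmap u w = qmap u w'"
      have "qmap u (x - w') = qmap u m"
        using qmap_eqD[OF w'(2)] mw(3) \<open>m1 = m\<close> by (intro qmap_eqI) (simp add: algebra_simps)
      from key[OF nz mM(1) this calW_sub[OF w'(1)], of m] show False using x by simp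
    qed
    then have wS1: "w \<in> scrW1 u W" using wS unfolding scrW1_def by blast
    have "\<forall>m' \<in> calM. \<forall>w' \<in> calW u W. qmap u (m + w) \<noteq> qmap u (m' + w')"
    proof (intro ballI notI)
      fix m' w' assume h: "m' \<in> calM" "w' \<in> calW u W" "qmap u (m + w) = qmap u (m' + w')"
      have "qmap u (x - w') = qmap u m'"
        using qmap_eqD[OF h(3)] mw(3) \<open>m1 = m\<close> by (intro qmap_eqI) (simp add: algebra_simps)
      from key[OF nz _ this calW_sub[OF h(2)], of M m] show False using x h(1) assms(4) by auto
    qed
    then show ?thesis using wS1 by blast
  qed

  have scr_ne: "scrW1 u W \<noteq> {}" using part2 calM_ne by blast
  have img: "qmap u ` sumset calM (calW u W \<union> scrW1 u W) = range (qmap u)"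
  proof
    show "range (qmap u) \<subseteq> qmap u ` sumset calM (calW u W \<union> scrW1 u W)"
    proof
      fix v assume "v \<in> range (qmap u)"
      then obtain y where y: "v = qmap u y" by blast
      obtain m w where "m \<in> calM" "w \<in> calW u W \<union> scrW1 u W" "qmap u (m + w) = qmap u y"
        using cover by blast
      then show "v \<in> qmap u ` sumset calM (calW u W \<union> scrW1 u W)"
        unfolding sumset_def y by blast
    qed
  qed auto
  have p2: "\<forall>m \<in> calM. \<exists>w \<in> scrW1 u W. \<forall>m' \<in> calM. \<forall>w' \<in> calW u W.
           qmap u (m + w) \<noteq> qmap u (m' + w')" using part2 by (rule ballI)
  show ?thesis by (intro conjI inf calM_ne finM scr_ne img p2)
qed

end
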